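(* Consider a Bayesian persuasion setting with binary state space $\Theta=\{\theta_1,\theta_2\}$, binary action space $A=\{a_1,a_2\}$, a finite signal space $\Sigma$ with $|\Sigma|\ge 2$, common prior with $p=\Pr_\mu[\theta=\theta_1]$, sender utility $u_S:\Theta\times A\to\mathbb{R}$ and receiver utility $u_R:\Theta\times A\to\mathbb{R}$. Assume the receiver is state-matching: $u_R(\theta_1,a_1)\ge u_R(\theta_1,a_2)$ and $u_R(\theta_2,a_2)\ge u_R(\theta_2,a_1)$; and the sender is action-matching: $u_S(\theta_1,a_1)\ge u_S(\theta_2,a_1)$ and $u_S(\theta_2,a_2)\ge u_S(\theta_1,a_2)$. Let $(\ell,h)$ and $(\ell',h')$ be two feasible constraints, i.e. $\ell\le p\le h$ and $\ell'\le p\le h'$, such that $(\ell,h)$ is more binding than $(\ell',h')$, i.e. $\ell'\le \ell$ and $h\le h'$. Let $\Phi$ and $\Phi'$ be the sets of sender-optimal signaling schemes under the constraints $(\ell,h)$ and $(\ell',h')$ respectively. Let $\varphi\in\Phi$ maximize the receiver's expected utility $\mathbb{E}_{\theta\sim\mu,\sigma\sim\varphi(\theta),a\sim\pi_\varphi(\sigma)}[u_R(\theta,a)]$ over $\Phi$, and let $\varphi'\in\Phi'$ maximize the receiver's expected utility $\mathbb{E}_{\theta\sim\mu,\sigma\sim\varphi'(\theta),a\sim\pi_{\varphi'}(\sigma)}[u_R(\theta,a)]$ over $\Phi'$. Then $$\mathbb{E}_{\theta\sim\mu,\sigma\sim\varphi(\theta),a\sim\pi_\varphi(\sigma)}[u_R(\theta,a)]\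 \ge\ \mathbb{E}_{\theta\sim\mu,\sigma\sim\varphi'(\theta),a\sim\pi_{\varphi'}(\sigma)}[u_R(\theta,a)].$$
   Context: The sender commits to a signaling scheme $\varphi:\Theta\to\Delta(\Sigma)$ before observing the state $\theta\sim\mu$, then sends $\sigma\sim\varphi(\theta)$. The receiver observes $\sigma$ and chooses an action via a (possibly randomized) strategy $\pi:\Sigma\to\Delta(A)$. A constraint $(\ell,h)$ with $0\le\ell\le h\le 1$ requires that the overall probability (over the randomness of the state, the sender's signal and the receiver's randomization) that the receiver plays $a_1$ lies in $[\ell,h]$, i.e. $\ell\le \Pr_{\mu,\varphi,\pi}[\pi(\varphi(\theta))=a_1]\le h$. Under a constraint, the receiver's best response $\pi_\varphi$ to $\varphi$ is a strategy satisfying the constraint that maximizes her expected utility $\mathbb{E}[u_R(\theta,a)]$ among all strategies satisfying the constraint, with ties broken in favor of the sender. A signaling scheme is sender-optimal under a constraint if it maximizes the sender's expected utility $\mathbb{E}_{\theta\sim\mu,\sigma\sim\varphi(\theta),a\sim\pi_\varphi(\sigma)}[u_S(\theta,a)]$ given that the receiver plays her constrained best response. *)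

theory Defs
  imports Complex_Main
begin

datatype state = T1 | T2
datatype action = A1 | A2

definition prior :: "real \<Rightarrow> state \<Rightarrow> real" where
  "prior p t = (case t of T1 \<Rightarrow> p | T2 \<Rightarrow> 1 - p)"

definition is_scheme :: "(state \<Rightarrow> 's::finite \<Rightarrow> real) \<Rightarrow> bool" where
  "is_scheme phi \<longleftrightarrow> (\<forall>t s. 0 \<le> phi t s) \<and> (\<forall>t. (\<Sum>s\<in>UNIV. phi t s) = 1)"

text \<open>Receiver strategy: st s = probability of playing A1 after signal s
  (a distribution over the binary action set).\<close>
definition is_strategy :: "('s \<Rightarrow> real) \<Rightarrow> bool" where
  "is_strategy st \<longleftrightarrow> (\<forall>s. 0 \<le> st s \<and> st s \<le> 1)"

definition act_prob :: "('s \<Rightarrow> real) \<Rightarrow> 's \<Rightarrow> action \<Rightarrow> real" where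
  "act_prob st s a = (case a of A1 \<Rightarrow> st s | A2 \<Rightarrow> 1 - st s)"

definition exp_util ::
  "(state \<Rightarrow> action \<Rightarrow> real) \<Rightarrow> real \<Rightarrow> (state \<Rightarrow> 's::finite \<Rightarrow> real) \<Rightarrow> ('s \<Rightarrow> real) \<Rightarrow> real" where
  "exp_util u p phi st =
     (\<Sum>t\<in>{T1,T2}. \<Sum>s\<in>UNIV. \<Sum>a\<in>{A1,A2}. prior p t * phi t s * act_prob st s a * u t a)"

definition prob_a1 :: "real \<Rightarrow> (state \<Rightarrow> 's::finite \<Rightarrow> real) \<Rightarrow> ('s \<Rightarrow> real) \<Rightarrow> real" where
  "prob_a1 p phi st = (\<Sum>t\<in>{T1,T2}. \<Sum>s\<in>UNIV. prior p t * phi t s * st s)"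

definition satisfies :: "real \<Rightarrow> real \<Rightarrow> real \<Rightarrow> (state \<Rightarrow> 's::finite \<Rightarrow> real) \<Rightarrow> ('s \<Rightarrow> real) \<Rightarrow> bool" where
  "satisfies l h p phi st \<longleftrightarrow> is_strategy st \<and> l \<le> prob_a1 p phi st \<and> prob_a1 p phi st \<le> h"

definition receiver_opt ::
  "(state \<Rightarrow> action \<Rightarrow> real) \<Rightarrow> real \<Rightarrow> real \<Rightarrow> real \<Rightarrow> (state \<Rightarrow> 's::finite \<Rightarrow> real) \<Rightarrow> ('s \<Rightarrow> real) \<Rightarrow> bool" where
  "receiver_opt uR l h p phi st \<longleftrightarrow> satisfies l h p phi st \<and>
     (\<forall>st'. satisfies l h p phi st' \<longrightarrow> exp_util uR p phi st' \<le> exp_util uR p phi st)"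

definition best_response ::
  "(state \<Rightarrow> action \<Rightarrow> real) \<Rightarrow> (state \<Rightarrow> action \<Rightarrow> real) \<Rightarrow> real \<Rightarrow> real \<Rightarrow> real \<Rightarrow>
   (state \<Rightarrow> 's::finite \<Rightarrow> real) \<Rightarrow> ('s \<Rightarrow> real) \<Rightarrow> bool" where
  "best_response uS uR l h p phi st \<longleftrightarrow> receiver_opt uR l h p phi st \<and>
     (\<forall>st'. receiver_opt uR l h p phi st' \<longrightarrow> exp_util uS p phi st' \<le> exp_util uS p phi st)"

definition sender_optimal ::
  "(state \<Rightarrow> action \<Rightarrow> real) \<Rightarrow> (state \<Rightarrow> action \<Rightarrow> real) \<Rightarrow> real \<Rightarrow> real \<Rightarrow> real \<Rightarrow>
   (state \<Rightarrow> 's::finite \<Rightarrow> real) \<Rightarrow> bool" where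
  "sender_optimal uS uR l h p phi \<longleftrightarrow> is_scheme phi \<and>
     (\<exists>st. best_response uS uR l h p phi st \<and>
        (\<forall>(psi :: state \<Rightarrow> 's \<Rightarrow> real) rho. is_scheme psi \<and> best_response uS uR l h p psi rho \<longrightarrow>
            exp_util uS p psi rho \<le> exp_util uS p phi st))"

end

theory Submission
  imports Defs
begin


definition TX :: "real \<Rightarrow> real \<Rightarrow> real \<Rightarrow> real \<Rightarrow> real \<Rightarrow> real" where
  "TX a b g p l = (if g < 0 then p - (if a*(p-l) \<le> b*(1-p) then p-l else b*(1-p)/a) else p)"
definition TY :: "real \<Rightarrow> real \<Rightarrow> real \<Rightarrow> real \<Rightarrow> real \<Rightarrow> real" where
  "TY a b d p h = (if d < 0 then (if b*(h-p) \<le> a*p then h-p else a*p/b) else 0)"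

lemma target_props:
  fixes a b g d p l h :: real
  assumes "a \<ge> 0" "b \<ge> 0" "g + d \<ge> 0" "0 \<le> l" "l \<le> p" "p \<le> h" "h \<le> 1"
  shows "(0 \<le> TX a b g p l \<and> TX a b g p l \<le> p \<and> 0 \<le> TY a b d p h \<and> TY a b d p h \<le> 1 - p
    \<and> l \<le> TX a b g p l + TY a b d p h \<and> TX a b g p l + TY a b d p h \<le> h)
    \<and> b * TY a b d p h \<le> a * TX a b g p l \<and> a * (p - TX a b g p l) \<le> b * (1 - p - TY a b d p h)"
proof -
  consider (A) "g \<ge> 0" "d \<ge> 0" | (B) "g < 0" "d > 0" | (C) "d < 0" "g > 0"
    using assms(3) by linarith
  then show ?thesis
  proof cases
    case A
    then show ?thesis using assms by (simp add: TX_def TY_def)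
  next
    case B
    show ?thesis
    proof (cases "a*(p-l) \<le> b*(1-p)")
      case True
      then show ?thesis using assms B by (simp add: TX_def TY_def)
    next
      case False
      then have a: "a > 0" using assms by (smt (verit) mult_nonneg_nonneg mult_nonpos_nonneg)
      define z where "z = b*(1-p)/a"
      have z: "z < p - l" using False a by (simp add: divide_less_eq mult.commute z_def)
      have z0: "z \<ge> 0" using a assms by (simp add: z_def)
      have az: "a * z = b*(1-p)" using a by (simp add: z_def)
      have t: "TX a b g p l = p - z" "TY a b d p h = 0" using False B by (simp_all add: TX_def TY_def z_def)
      have "a * (p - z) \<ge> 0" using a z z0 assms by simp
      then show ?thesis using z z0 az assms unfolding t by (simp add: algebra_simps)
    qed
  next
    case C
    show ?thesis
    proof (cases "b*(h-p) \<le> a*p")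
      case True
      then show ?thesis using assms C by (simp add: TX_def TY_def)
    next
      case False
      then have bp: "b > 0" using assms by (smt (verit) mult_nonneg_nonneg mult_nonpos_nonneg)
      define z where "z = a*p/b"
      have z: "z < h - p" using False bp by (simp add: divide_less_eq mult.commute z_def)
      have z0: "z \<ge> 0" using bp assms by (simp add: z_def)
      have az: "b * z = a*p" using bp by (simp add: z_def)
      have t: "TX a b g p l = p" "TY a b d p h = z" using False C by (simp_all add: TX_def TY_def z_def)
      have "b * (1 - p - z) \<ge> 0" using bp z assms by simp
      then show ?thesis using z z0 az assms unfolding t by (simp add: algebra_simps)
    qed
  qed
qed

lemma target_mono:
  fixes a b g d p l h l' h' :: real
  assumes "a \<ge> 0" "b \<ge> 0" "g + d \<ge> 0" "l' \<le> l" "h \<le> h'" "0 \<le> p" "p \<le> 1"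
  shows "a * TX a b g p l' - b * TY a b d p h' \<le> a * TX a b g p l - b * TY a b d p h"
proof -
  have m1: "a * TX a b g p l' \<le> a * TX a b g p l"
  proof (cases "g < 0")
    case True
    have "a * (if a*(p-l) \<le> b*(1-p) then p-l else b*(1-p)/a) = min (a*(p-l)) (b*(1-p))" for l
      using assms by (cases "a = 0") (auto simp: min_def)
    from this[of l] this[of l'] have "a * (if a*(p-l) \<le> b*(1-p) then p-l else b*(1-p)/a)
       \<le> a * (if a*(p-l') \<le> b*(1-p) then p-l' else b*(1-p)/a)"
      using assms mult_left_mono[of "p - l" "p - l'" a] by (simp add: min_def)
    then show ?thesis using True by (simp add: TX_def algebra_simps)
  next
    case False
    then show ?thesis by (simp add: TX_def)
  qed
  have m2: "b * TY a b d p h \<le> b * TY a b d p h'"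
  proof (cases "d < 0")
    case True
    have "b * (if b*(h-p) \<le> a*p then h-p else a*p/b) = min (b*(h-p)) (a*p)" for h
      using assms by (cases "b = 0") (auto simp: min_def)
    from this[of h] this[of h'] show ?thesis
      using True assms mult_left_mono[of "h - p" "h' - p" b] by (simp add: TY_def min_def)
  next
    case False
    then show ?thesis by (simp add: TY_def)
  qed
  show ?thesis using m1 m2 by linarith
qed

lemma core:
  fixes a b g d p l h x y :: real
  assumes a: "a \<ge> 0" and b: "b \<ge> 0" and gd: "g + d \<ge> 0" and pr: "0 \<le> l" "l \<le> p" "p \<le> h" "h \<le> 1"
    and xy: "0 \<le> x" "x \<le> p" "0 \<le> y" "y \<le> 1 - p" "l \<le> x + y" "x + y \<le> h"
    and F1: "x + y > l \<Longrightarrow> b * y \<le> a * x"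
    and F2: "x + y < h \<Longrightarrow> a * (p - x) \<le> b * (1 - p - y)"
  shows "g * x - d * y \<le> g * TX a b g p l - d * TY a b d p h \<and>
    (g * x - d * y \<ge> g * TX a b g p l - d * TY a b d p h \<longrightarrow>
      a * x - b * y \<le> a * TX a b g p l - b * TY a b d p h)"
proof -
  have ty0: "TY a b d p h \<ge> 0" and tx0: "TX a b g p l \<le> p"
    using target_props[OF a b gd pr] by auto
  have ax: "a * x \<le> a * p" using a xy by (simp add: mult_left_mono)
  have by0: "b * y \<ge> 0" using b xy by simp
  consider (A) "g \<ge> 0" "d \<ge> 0" | (B) "g < 0" "d > 0" | (C) "d < 0" "g > 0"
    using gd by linarith
  then show ?thesis
  proof cases
    case A
    have "g * x \<le> g * p" using A xy by (simp add: mult_left_mono)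
    moreover have "d * y \<ge> 0" using A xy by simp
    ultimately show ?thesis using A ax by0 by (simp add: TX_def TY_def)
  next
    case C
    have tx: "TX a b g p l = p" using C by (simp add: TX_def)
    have gx: "g * x \<le> g * p" using C xy by (simp add: mult_left_mono)
    show ?thesis
    proof (cases "x + y > l")
      case False
      hence q: "x + y = l" using xy by simp
      have "(g + d) * y \<ge> 0" using gd xy by simp
      moreover have "g * x - d * y = g * (x + y) - (g + d) * y" by (simp add: algebra_simps)
      ultimately have s1: "g * x - d * y \<le> g * l" using q by simp
      have "g * l \<le> g * p" using C pr by (simp add: mult_left_mono)
      moreover have "d * TY a b d p h \<le> 0" using C ty0 by (simp add: mult_nonpos_nonneg)
      ultimately have S: "g * x - d * y \<le> g * TX a b g p l - d * TY a b d p h"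
        using s1 unfolding tx by linarith
      have "g * x - d * y \<ge> g * TX a b g p l - d * TY a b d p h \<Longrightarrow> TY a b d p h = 0"
      proof -
        assume "g * x - d * y \<ge> g * TX a b g p l - d * TY a b d p h"
        hence "d * TY a b d p h \<ge> 0" using s1 \<open>g * l \<le> g * p\<close> unfolding tx by linarith
        thus ?thesis using C ty0 by (smt (verit) mult_neg_pos)
      qed
      then show ?thesis using S ax by0 tx by auto
    next
      case True
      hence ob: "b * y \<le> a * x" by (rule F1)
      show ?thesis
      proof (cases "b*(h-p) \<le> a*p")
        case T2: True
        hence ty: "TY a b d p h = h - p" using C by (simp add: TY_def)
        have e1: "(g + d) * x \<le> (g + d) * p" using gd xy by (simp add: mult_left_mono)
        have e2: "- d * (x + y) \<le> - d * h" using C xy by (simp add: mult_left_mono)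
        have S: "g * x - d * y \<le> g * p - d * (h - p)" using e1 e2 by (simp add: algebra_simps)
        have R: "g * x - d * y \<ge> g * p - d * (h - p) \<Longrightarrow> a * x - b * y \<le> a * p - b * (h - p)"
        proof -
          assume "g * x - d * y \<ge> g * p - d * (h - p)"
          hence "- d * (x + y) \<ge> - d * h" using e1 by (simp add: algebra_simps)
          hence "x + y \<ge> h" using C by (simp add: mult_le_cancel_left)
          hence yy: "y = h - x" using xy by simp
          have "(a + b) * x \<le> (a + b) * p" using a b xy by (simp add: mult_left_mono)
          thus ?thesis unfolding yy by (simp add: algebra_simps)
        qed
        show ?thesis using S R tx ty by simp
      next
        case F2: False
        then have bp: "b > 0" using a pr by (smt (verit) mult_nonneg_nonneg mult_nonpos_nonneg)
        define z where "z = a*p/b"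
        have bz: "b * z = a*p" using bp by (simp add: z_def)
        have ty: "TY a b d p h = z" using F2 C by (simp add: TY_def z_def)
        have "b * y \<le> b * z" using ob ax bz by simp
        hence yz: "y \<le> z" using bp by simp
        have dy: "- d * y \<le> - d * z" using C yz by (simp add: mult_left_mono)
        have S: "g * x - d * y \<le> g * p - d * z" using gx dy by simp
        have R: "g * x - d * y \<ge> g * p - d * z \<Longrightarrow> a * x - b * y \<le> a * p - b * z"
        proof -
          assume "g * x - d * y \<ge> g * p - d * z"
          hence "- d * y \<ge> - d * z" using gx by simp
          hence "y \<ge> z" using C by (simp add: mult_le_cancel_left)
          hence "y = z" using yz by simp
          thus ?thesis using ax by simp
        qed
        show ?thesis using S R tx ty by simp
      qed
    qed
  next
    case B
    have ty: "TY a b d p h = 0" using B by (simp add: TY_def)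
    have f: "- g > 0" using B by simp
    have dyg: "- d * y \<le> g * y" using mult_nonneg_nonneg[OF gd xy(3)] by (simp add: algebra_simps)
    show ?thesis
    proof (cases "x + y < h")
      case False
      hence q: "x + y = h" using xy by simp
      have "g * x - d * y = g * (x + y) - (g + d) * y" by (simp add: algebra_simps)
      moreover have "(g + d) * y \<ge> 0" using gd xy by simp
      ultimately have s1: "g * x - d * y \<le> g * h" using q by simp
      have "g * h \<le> g * p" using B pr by (simp add: mult_left_mono_neg)
      moreover have "g * p \<le> g * TX a b g p l" using B tx0 by (simp add: mult_left_mono_neg)
      ultimately have S: "g * x - d * y \<le> g * TX a b g p l - d * TY a b d p h"
        using s1 unfolding ty by linarith
      have R: "g * x - d * y \<ge> g * TX a b g p l \<Longrightarrow> a * x \<le> a * TX a b g p l"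
      proof -
        assume "g * x - d * y \<ge> g * TX a b g p l"
        hence "g * h \<ge> g * TX a b g p l" using s1 by simp
        hence "h \<le> TX a b g p l" using B by (simp add: mult_le_cancel_left)
        hence "x \<le> TX a b g p l" using q xy by simp
        thus ?thesis using a by (simp add: mult_left_mono)
      qed
      show ?thesis using S R ty by0 by auto
    next
      case True
      hence ob: "a * (p - x) \<le> b * (1 - p - y)" by (rule F2)
      show ?thesis
      proof (cases "a*(p-l) \<le> b*(1-p)")
        case T2: True
        hence tx: "TX a b g p l = l" using B by (simp add: TX_def)
        have s1: "g * x - d * y \<le> g * (x + y)" using dyg by (simp add: algebra_simps)
        have "g * (x + y) \<le> g * l" using B xy by (simp add: mult_left_mono_neg)
        hence S: "g * x - d * y \<le> g * l" using s1 by simp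
        have R: "g * x - d * y \<ge> g * l \<Longrightarrow> a * x \<le> a * l"
        proof -
          assume "g * x - d * y \<ge> g * l"
          hence "g * (x + y) \<ge> g * l" using s1 by simp
          hence "x + y \<le> l" using B by (simp add: mult_le_cancel_left)
          hence "x \<le> l" using xy by simp
          thus ?thesis using a by (simp add: mult_left_mono)
        qed
        show ?thesis using S R tx ty by0 by auto
      next
        case F2: False
        then have ap: "a > 0" using b pr by (smt (verit) mult_nonneg_nonneg mult_nonpos_nonneg)
        define z where "z = b*(1-p)/a"
        have az: "a * z = b*(1-p)" using ap by (simp add: z_def)
        have tx: "TX a b g p l = p - z" using F2 B by (simp add: TX_def z_def)
        have "b * (1 - p - y) \<le> b * (1 - p)" using b xy by (simp add: mult_left_mono)
        hence "a * (p - x) \<le> a * z" using ob az by simp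
        hence xz: "p - z \<le> x" using ap by simp
        have gx: "g * x \<le> g * (p - z)" using B xz by (simp add: mult_left_mono_neg)
        have dy: "- d * y \<le> 0" using B xy by simp
        have S: "g * x - d * y \<le> g * (p - z)" using gx dy by simp
        have R: "g * x - d * y \<ge> g * (p - z) \<Longrightarrow> a * x \<le> a * (p - z)"
        proof -
          assume "g * x - d * y \<ge> g * (p - z)"
          hence "g * x \<ge> g * (p - z)" using dy by simp
          hence "x \<le> p - z" using B by (simp add: mult_le_cancel_left)
          thus ?thesis using a by (simp add: mult_left_mono)
        qed
        show ?thesis using S R tx ty by0 by auto
      qed
    qed
  qed
qed



definition XX :: "(state \<Rightarrow> 's::finite \<Rightarrow> real) \<Rightarrow> ('s \<Rightarrow> real) \<Rightarrow> state \<Rightarrow> real" where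
  "XX phi st t = (\<Sum>s\<in>UNIV. phi t s * st s)"

lemma sum_aux:
  fixes f g :: "'s \<Rightarrow> real"
  shows "(\<Sum>s\<in>A. c * f s * g s * u1 + c * f s * (1 - g s) * u2)
    = c * u2 * (\<Sum>s\<in>A. f s) + c * (u1 - u2) * (\<Sum>s\<in>A. f s * g s)"
proof -
  have "(\<Sum>s\<in>A. c * f s * g s * u1 + c * f s * (1 - g s) * u2)
     = (\<Sum>s\<in>A. (c * u2) * f s + (c * (u1 - u2)) * (f s * g s))"
    by (rule sum.cong) (auto simp: algebra_simps)
  also have "\<dots> = c * u2 * (\<Sum>s\<in>A. f s) + c * (u1 - u2) * (\<Sum>s\<in>A. f s * g s)"
    by (simp add: sum.distrib sum_distrib_left)
  finally show ?thesis .
qed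

lemma eu:
  assumes "is_scheme phi"
  shows "exp_util u p phi st = u T1 A2 * p + u T2 A2 * (1-p)
     + (u T1 A1 - u T1 A2) * (p * XX phi st T1) - (u T2 A2 - u T2 A1) * ((1-p) * XX phi st T2)"
proof -
  have s: "(\<Sum>s\<in>UNIV. phi t s) = 1" for t using assms by (simp add: is_scheme_def)
  have "exp_util u p phi st =
     (\<Sum>s\<in>UNIV. p * phi T1 s * st s * u T1 A1 + p * phi T1 s * (1 - st s) * u T1 A2) +
     (\<Sum>s\<in>UNIV. (1-p) * phi T2 s * st s * u T2 A1 + (1-p) * phi T2 s * (1 - st s) * u T2 A2)"
    by (simp add: exp_util_def act_prob_def prior_def)
  also have "\<dots> = u T1 A2 * p + u T2 A2 * (1-p)
     + (u T1 A1 - u T1 A2) * (p * XX phi st T1) - (u T2 A2 - u T2 A1) * ((1-p) * XX phi st T2)"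
    unfolding sum_aux s XX_def by (simp add: algebra_simps)
  finally show ?thesis .
qed

lemma pa: "prob_a1 p phi st = p * XX phi st T1 + (1-p) * XX phi st T2"
  by (simp add: prob_a1_def prior_def XX_def sum_distrib_left mult.assoc)

lemma XX_bounds:
  assumes "is_scheme phi" "is_strategy st"
  shows "0 \<le> XX phi st t" "XX phi st t \<le> 1"
proof -
  show "0 \<le> XX phi st t" using assms unfolding XX_def is_scheme_def is_strategy_def
    by (intro sum_nonneg) auto
  have "XX phi st t \<le> (\<Sum>s\<in>UNIV. phi t s)" unfolding XX_def
    using assms unfolding is_scheme_def is_strategy_def
    by (intro sum_mono) (simp add: mult_left_le)
  then show "XX phi st t \<le> 1" using assms by (simp add: is_scheme_def)
qed

lemma XX_scale: "XX phi (\<lambda>s. c * st s) t = c * XX phi st t"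
  by (simp add: XX_def sum_distrib_left algebra_simps)

lemma XX_coscale:
  assumes "is_scheme phi"
  shows "XX phi (\<lambda>s. 1 - c * (1 - st s)) t = 1 - c * (1 - XX phi st t)"
proof -
  have s: "(\<Sum>s\<in>UNIV. phi t s) = 1" using assms by (simp add: is_scheme_def)
  have "XX phi (\<lambda>s. 1 - c * (1 - st s)) t = (\<Sum>s\<in>UNIV. (1 - c) * phi t s + c * (phi t s * st s))"
    unfolding XX_def by (rule sum.cong) (auto simp: algebra_simps)
  also have "\<dots> = (1 - c) * (\<Sum>s\<in>UNIV. phi t s) + c * XX phi st t"
    by (simp add: sum.distrib sum_distrib_left XX_def)
  also have "\<dots> = 1 - c * (1 - XX phi st t)"
    by (simp add: s algebra_simps)
  finally show ?thesis .
qed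



lemma recv_F:
  assumes sch: "is_scheme phi" and ro: "receiver_opt uR l h p phi st"
    and pr: "0 \<le> p" "p \<le> 1" "0 \<le> l" "l \<le> h" "h \<le> 1"
  defines "x \<equiv> p * XX phi st T1" and "y \<equiv> (1 - p) * XX phi st T2"
    and "a \<equiv> uR T1 A1 - uR T1 A2" and "b \<equiv> uR T2 A2 - uR T2 A1"
  shows "x + y > l \<Longrightarrow> b * y \<le> a * x"
    and "x + y < h \<Longrightarrow> a * (p - x) \<le> b * (1 - p - y)"
proof -
  have sat: "satisfies l h p phi st" and opt: "\<And>st'. satisfies l h p phi st' \<Longrightarrow> exp_util uR p phi st' \<le> exp_util uR p phi st"
    using ro by (auto simp: receiver_opt_def)
  have str: "is_strategy st" and q: "l \<le> x + y" "x + y \<le> h"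
    using sat by (auto simp: satisfies_def pa x_def y_def)
  have E: "exp_util uR p phi st' = uR T1 A2 * p + uR T2 A2 * (1-p) + a * (p * XX phi st' T1) - b * ((1-p) * XX phi st' T2)" for st'
    using eu[OF sch] by (simp add: a_def b_def)
  show "b * y \<le> a * x" if lt: "x + y > l"
  proof -
    define c where "c = l / (x + y)"
    have qp: "x + y > 0" using lt pr by linarith
    have c0: "0 \<le> c" "c < 1" using qp lt pr by (auto simp: c_def divide_less_eq)
    have cq: "c * (x + y) = l" using qp by (simp add: c_def)
    define st2 where "st2 = (\<lambda>s. c * st s)"
    have "is_strategy st2" using str c0 unfolding is_strategy_def st2_def
      by (auto simp: mult_le_one)
    moreover have "prob_a1 p phi st2 = l" unfolding pa st2_def XX_scale
      using cq by (simp add: x_def y_def algebra_simps)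
    ultimately have "satisfies l h p phi st2" using pr by (simp add: satisfies_def)
    from opt[OF this] have "c * (a * x - b * y) \<le> a * x - b * y"
      unfolding E st2_def XX_scale by (simp add: x_def y_def algebra_simps)
    hence "(1 - c) * (a * x - b * y) \<ge> 0" by (simp add: algebra_simps)
    thus ?thesis using c0 by (simp add: zero_le_mult_iff)
  qed
  show "a * (p - x) \<le> b * (1 - p - y)" if lt: "x + y < h"
  proof -
    define c where "c = (1 - h) / (1 - (x + y))"
    have qp: "1 - (x + y) > 0" using lt pr by linarith
    have c0: "0 \<le> c" "c < 1" using qp lt pr by (auto simp: c_def divide_less_eq)
    have cq: "c * (1 - (x + y)) = 1 - h" using qp by (simp add: c_def)
    define st2 where "st2 = (\<lambda>s. 1 - c * (1 - st s))"
    have "is_strategy st2" using str c0 unfolding is_strategy_def st2_def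
      by (auto simp: mult_le_one)
    moreover have "prob_a1 p phi st2 = h" unfolding pa st2_def XX_coscale[OF sch]
      using cq by (simp add: x_def y_def algebra_simps)
    ultimately have "satisfies l h p phi st2" using pr by (simp add: satisfies_def)
    from opt[OF this] have "- c * (a * (p - x) - b * (1 - p - y)) \<le> - (a * (p - x) - b * (1 - p - y))"
      unfolding E st2_def XX_coscale[OF sch] by (simp add: x_def y_def algebra_simps)
    hence "(1 - c) * (a * (p - x) - b * (1 - p - y)) \<le> 0" by (simp add: algebra_simps)
    thus ?thesis using c0 by (simp add: mult_le_0_iff)
  qed
qed



definition psi0 :: "'s \<Rightarrow> 's \<Rightarrow> real \<Rightarrow> real \<Rightarrow> state \<Rightarrow> 's::finite \<Rightarrow> real" where
  "psi0 s1 s2 a b = (\<lambda>t s. if t = T1 then (if s = s1 then a else if s = s2 then 1 - a else 0)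
      else (if s = s1 then b else if s = s2 then 1 - b else 0))"

definition ind :: "'s \<Rightarrow> 's \<Rightarrow> real" where
  "ind s1 = (\<lambda>s. if s = s1 then 1 else 0)"

lemma sum_two:
  fixes st :: "'s::finite \<Rightarrow> real"
  assumes "s1 \<noteq> s2"
  shows "(\<Sum>s\<in>UNIV. (if s = s1 then a else if s = s2 then c else 0) * st s) = a * st s1 + c * st s2"
proof -
  have "(\<Sum>s\<in>UNIV. (if s = s1 then a else if s = s2 then c else 0) * st s)
     = (\<Sum>s\<in>UNIV. (if s = s1 then a * st s1 else 0) + (if s = s2 then c * st s2 else 0))"
    by (rule sum.cong) (use assms in auto)
  also have "\<dots> = a * st s1 + c * st s2" by (simp add: sum.distrib)
  finally show ?thesis .
qed

lemma XX_psi0: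
  assumes "s1 \<noteq> s2"
  shows "XX (psi0 s1 s2 a b) st T1 = a * st s1 + (1 - a) * st s2"
    "XX (psi0 s1 s2 a b) st T2 = b * st s1 + (1 - b) * st s2"
  using sum_two[OF assms] by (simp_all add: XX_def psi0_def)

lemma scheme_psi0:
  assumes "s1 \<noteq> s2" "0 \<le> a" "a \<le> 1" "0 \<le> b" "b \<le> 1"
  shows "is_scheme (psi0 s1 s2 a b)"
proof -
  have "(\<Sum>s\<in>UNIV. psi0 s1 s2 a b t s) = XX (psi0 s1 s2 a b) (\<lambda>_. 1) t" for t
    by (simp add: XX_def)
  moreover have "XX (psi0 s1 s2 a b) (\<lambda>_. 1) t = 1" for t
    using XX_psi0[OF assms(1)] by (cases t) auto
  ultimately show ?thesis using assms unfolding is_scheme_def psi0_def by auto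
qed

lemma outcome_core:
  assumes sch: "is_scheme psi" and ro: "receiver_opt uR l h p psi rho"
    and pr: "0 \<le> l" "l \<le> p" "p \<le> h" "h \<le> 1"
    and ab: "uR T1 A1 \<ge> uR T1 A2" "uR T2 A2 \<ge> uR T2 A1"
    and gd: "uS T1 A1 - uS T1 A2 + (uS T2 A2 - uS T2 A1) \<ge> 0"
  defines "x \<equiv> p * XX psi rho T1" and "y \<equiv> (1 - p) * XX psi rho T2"
    and "a \<equiv> uR T1 A1 - uR T1 A2" and "b \<equiv> uR T2 A2 - uR T2 A1"
    and "g \<equiv> uS T1 A1 - uS T1 A2" and "d \<equiv> uS T2 A2 - uS T2 A1"
  shows "g * x - d * y \<le> g * TX a b g p l - d * TY a b d p h \<and>
    (g * x - d * y \<ge> g * TX a b g p l - d * TY a b d p h \<longrightarrow>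
      a * x - b * y \<le> a * TX a b g p l - b * TY a b d p h)"
proof -
  have p01: "0 \<le> p" "p \<le> 1" using pr by auto
  have sat: "satisfies l h p psi rho" using ro by (simp add: receiver_opt_def)
  have str: "is_strategy rho" and q: "l \<le> x + y" "x + y \<le> h"
    using sat by (auto simp: satisfies_def pa x_def y_def)
  have X: "0 \<le> XX psi rho t" "XX psi rho t \<le> 1" for t using XX_bounds[OF sch str] by auto
  have xb: "0 \<le> x" "x \<le> p" unfolding x_def using X[of T1] p01 by (auto simp: mult_left_le)
  have yb: "0 \<le> y" "y \<le> 1 - p" unfolding y_def using X[of T2] p01 by (auto simp: mult_left_le)
  note F = recv_F[OF sch ro p01 pr(1) _ pr(4)]
  have l_h: "l \<le> h" using pr by linarith
  show ?thesis
    apply (rule core)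
    using ab gd pr xb yb q F[OF l_h] by (auto simp: a_def b_def g_def d_def x_def y_def)
qed



lemma constructed:
  fixes s1 s2 :: "'s::finite"
  assumes s12: "s1 \<noteq> s2" and ab01: "0 \<le> a0" "a0 \<le> 1" "0 \<le> b0" "b0 \<le> 1"
    and pr: "0 \<le> l" "l \<le> p" "p \<le> h" "h \<le> 1"
    and ab: "uR T1 A1 \<ge> uR T1 A2" "uR T2 A2 \<ge> uR T2 A1"
    and gd: "uS T1 A1 - uS T1 A2 + (uS T2 A2 - uS T2 A1) \<ge> 0"
    and ta: "p * a0 = TX (uR T1 A1 - uR T1 A2) (uR T2 A2 - uR T2 A1) (uS T1 A1 - uS T1 A2) p l"
    and tb: "(1 - p) * b0 = TY (uR T1 A1 - uR T1 A2) (uR T2 A2 - uR T2 A1) (uS T2 A2 - uS T2 A1) p h"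
  shows "sender_optimal uS uR l h p (psi0 s1 s2 a0 b0) \<and> best_response uS uR l h p (psi0 s1 s2 a0 b0) (ind s1)
    \<and> exp_util uR p (psi0 s1 s2 a0 b0) (ind s1) = uR T1 A2 * p + uR T2 A2 * (1-p)
        + (uR T1 A1 - uR T1 A2) * TX (uR T1 A1 - uR T1 A2) (uR T2 A2 - uR T2 A1) (uS T1 A1 - uS T1 A2) p l
        - (uR T2 A2 - uR T2 A1) * TY (uR T1 A1 - uR T1 A2) (uR T2 A2 - uR T2 A1) (uS T2 A2 - uS T2 A1) p h
    \<and> exp_util uS p (psi0 s1 s2 a0 b0) (ind s1) = uS T1 A2 * p + uS T2 A2 * (1-p)
        + (uS T1 A1 - uS T1 A2) * TX (uR T1 A1 - uR T1 A2) (uR T2 A2 - uR T2 A1) (uS T1 A1 - uS T1 A2) p l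
        - (uS T2 A2 - uS T2 A1) * TY (uR T1 A1 - uR T1 A2) (uR T2 A2 - uR T2 A1) (uS T2 A2 - uS T2 A1) p h"
proof -
  define a where "a = uR T1 A1 - uR T1 A2"
  define b where "b = uR T2 A2 - uR T2 A1"
  define g where "g = uS T1 A1 - uS T1 A2"
  define d where "d = uS T2 A2 - uS T2 A1"
  define tx where "tx = TX a b g p l"
  define ty where "ty = TY a b d p h"
  define psi where "psi = psi0 s1 s2 a0 b0"
  have a0: "a \<ge> 0" and b0: "b \<ge> 0" using ab by (auto simp: a_def b_def)
  have gd': "g + d \<ge> 0" using gd by (simp add: g_def d_def)
  have TP: "0 \<le> tx" "tx \<le> p" "0 \<le> ty" "ty \<le> 1 - p" "l \<le> tx + ty" "tx + ty \<le> h"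
    "b * ty \<le> a * tx" "a * (p - tx) \<le> b * (1 - p - ty)"
    using target_props[OF a0 b0 gd' pr] by (auto simp: tx_def ty_def)
  have sch: "is_scheme psi" unfolding psi_def using scheme_psi0[OF s12 ab01] .
  have txa: "tx = p * a0" using ta by (simp add: tx_def a_def b_def g_def)
  have tyb: "ty = (1 - p) * b0" using tb by (simp add: ty_def a_def b_def d_def)
  have XT1: "p * XX psi st T1 = tx * st s1 + (p - tx) * st s2" for st
    unfolding psi_def XX_psi0[OF s12] txa by (simp add: algebra_simps)
  have XT2: "(1 - p) * XX psi st T2 = ty * st s1 + (1 - p - ty) * st s2" for st
    unfolding psi_def XX_psi0[OF s12] tyb by (simp add: algebra_simps)
  have ER: "exp_util uR p psi st = uR T1 A2 * p + uR T2 A2 * (1-p)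
     + a * (tx * st s1 + (p - tx) * st s2) - b * (ty * st s1 + (1 - p - ty) * st s2)" for st
    using eu[OF sch, of uR p st] XT1 XT2 by (simp add: a_def b_def)
  have ES: "exp_util uS p psi st = uS T1 A2 * p + uS T2 A2 * (1-p)
     + g * (tx * st s1 + (p - tx) * st s2) - d * (ty * st s1 + (1 - p - ty) * st s2)" for st
    using eu[OF sch, of uS p st] XT1 XT2 by (simp add: g_def d_def)
  have i1: "ind s1 s1 = 1" "ind s1 s2 = 0" using s12 by (auto simp: ind_def)
  have sat: "satisfies l h p psi (ind s1)"
    unfolding satisfies_def pa using XT1 XT2 i1 TP by (auto simp: is_strategy_def ind_def)
  have ropt: "receiver_opt uR l h p psi (ind s1)"
    unfolding receiver_opt_def
  proof (intro conjI allI impI sat)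
    fix st' assume "satisfies l h p psi st'"
    hence t: "0 \<le> st' s1" "st' s1 \<le> 1" "0 \<le> st' s2" "st' s2 \<le> 1"
      by (auto simp: satisfies_def is_strategy_def)
    have K: "a * tx - b * ty \<ge> 0" "a * (p - tx) - b * (1 - p - ty) \<le> 0" using TP by auto
    have "st' s1 * (a * tx - b * ty) \<le> a * tx - b * ty" using K t by (simp add: mult_left_le_one_le)
    moreover have "st' s2 * (a * (p - tx) - b * (1 - p - ty)) \<le> 0" using K t by (simp add: mult_nonneg_nonpos)
    ultimately show "exp_util uR p psi st' \<le> exp_util uR p psi (ind s1)"
      unfolding ER i1 by (simp add: algebra_simps)
  qed
  have ES0: "exp_util uS p psi (ind s1) = uS T1 A2 * p + uS T2 A2 * (1-p) + g * tx - d * ty"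
    unfolding ES i1 by simp
  have ER0: "exp_util uR p psi (ind s1) = uR T1 A2 * p + uR T2 A2 * (1-p) + a * tx - b * ty"
    unfolding ER i1 by simp
  have bound: "exp_util uS p psi' rho \<le> uS T1 A2 * p + uS T2 A2 * (1-p) + g * tx - d * ty"
    if "is_scheme psi'" "receiver_opt uR l h p psi' rho" for psi' :: "state \<Rightarrow> 's \<Rightarrow> real" and rho
  proof -
    have "g * (p * XX psi' rho T1) - d * ((1 - p) * XX psi' rho T2) \<le> g * tx - d * ty"
      using outcome_core[OF that pr ab gd] by (simp add: a_def b_def g_def d_def tx_def ty_def)
    then show ?thesis using eu[OF that(1), of uS p rho] by (simp add: g_def d_def)
  qed
  have br: "best_response uS uR l h p psi (ind s1)"
    unfolding best_response_def using ropt bound[OF sch] ES0 by auto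
  have so: "sender_optimal uS uR l h p psi"
    unfolding sender_optimal_def using sch br bound ES0
    by (auto simp: best_response_def)
  show ?thesis using so br ER0 ES0
    by (simp add: psi_def a_def b_def g_def d_def tx_def ty_def)
qed



lemma choose_ab:
  fixes p tx ty :: real
  assumes "0 \<le> p" "p \<le> 1" "0 \<le> tx" "tx \<le> p" "0 \<le> ty" "ty \<le> 1 - p"
  obtains a0 b0 where "0 \<le> a0" "a0 \<le> 1" "0 \<le> b0" "b0 \<le> 1" "p * a0 = tx" "(1 - p) * b0 = ty"
proof -
  define a0 where "a0 = (if p > 0 then tx / p else 0)"
  define b0 where "b0 = (if p < 1 then ty / (1 - p) else 0)"
  have "0 \<le> a0" "a0 \<le> 1" "p * a0 = tx" using assms by (auto simp: a0_def divide_le_eq)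
  moreover have "0 \<le> b0" "b0 \<le> 1" "(1 - p) * b0 = ty" using assms by (auto simp: b0_def divide_le_eq)
  ultimately show ?thesis using that by blast
qed

theorem theorem2:
  fixes uS uR :: "state \<Rightarrow> action \<Rightarrow> real"
    and p l h l' h' :: real
    and phi phi' :: "state \<Rightarrow> 's::finite \<Rightarrow> real"
    and st st' :: "'s \<Rightarrow> real"
  assumes card: "card (UNIV :: 's set) \<ge> 2"
    and prior: "0 \<le> p" "p \<le> 1"
    and recv_match: "uR T1 A1 \<ge> uR T1 A2" "uR T2 A2 \<ge> uR T2 A1"
    and send_match: "uS T1 A1 \<ge> uS T2 A1" "uS T2 A2 \<ge> uS T1 A2"
    and cons: "0 \<le> l" "l \<le> h" "h \<le> 1" "0 \<le> l'" "l' \<le> h'" "h' \<le> 1"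
    and feas: "l \<le> p" "p \<le> h" "l' \<le> p" "p \<le> h'"
    and binding: "l' \<le> l" "h \<le> h'"
    and opt: "sender_optimal uS uR l h p phi" "best_response uS uR l h p phi st"
    and max: "\<And>(psi :: state \<Rightarrow> 's \<Rightarrow> real) rho. sender_optimal uS uR l h p psi \<Longrightarrow> best_response uS uR l h p psi rho \<Longrightarrow>
                exp_util uR p psi rho \<le> exp_util uR p phi st"
    and opt': "sender_optimal uS uR l' h' p phi'" "best_response uS uR l' h' p phi' st'"
    and max': "\<And>(psi :: state \<Rightarrow> 's \<Rightarrow> real) rho. sender_optimal uS uR l' h' p psi \<Longrightarrow> best_response uS uR l' h' p psi rho \<Longrightarrow>
                exp_util uR p psi rho \<le> exp_util uR p phi' st'"
  shows "exp_util uR p phi st \<ge> exp_util uR p phi' st'"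
proof -
  obtain s1 s2 :: 's where s12: "s1 \<noteq> s2"
  proof -
    have "\<exists>s1 s2 :: 's. s1 \<noteq> s2"
    proof (rule ccontr)
      assume "\<not> ?thesis"
      hence "(UNIV :: 's set) = {undefined}" by auto
      hence "card (UNIV :: 's set) = card {undefined :: 's}" by (rule arg_cong)
      hence "card (UNIV :: 's set) = 1" by simp
      thus False using card by linarith
    qed
    thus ?thesis using that by blast
  qed
  define a where "a = uR T1 A1 - uR T1 A2"
  define b where "b = uR T2 A2 - uR T2 A1"
  define g where "g = uS T1 A1 - uS T1 A2"
  define d where "d = uS T2 A2 - uS T2 A1"
  have a0: "a \<ge> 0" and b0: "b \<ge> 0" using recv_match by (auto simp: a_def b_def)
  have gd: "uS T1 A1 - uS T1 A2 + (uS T2 A2 - uS T2 A1) \<ge> 0" using send_match by simp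
  have gd': "g + d \<ge> 0" using gd by (simp add: g_def d_def)
  have pr: "0 \<le> l" "l \<le> p" "p \<le> h" "h \<le> 1" using cons feas by auto
  have pr': "0 \<le> l'" "l' \<le> p" "p \<le> h'" "h' \<le> 1" using cons feas by auto
  have TP: "0 \<le> TX a b g p l" "TX a b g p l \<le> p" "0 \<le> TY a b d p h" "TY a b d p h \<le> 1 - p"
    using target_props[OF a0 b0 gd' pr] by auto
  have TP': "0 \<le> TX a b g p l'" "TX a b g p l' \<le> p" "0 \<le> TY a b d p h'" "TY a b d p h' \<le> 1 - p"
    using target_props[OF a0 b0 gd' pr'] by auto
  obtain a1 b1 where ab1: "0 \<le> a1" "a1 \<le> 1" "0 \<le> b1" "b1 \<le> 1"
      "p * a1 = TX a b g p l" "(1 - p) * b1 = TY a b d p h"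
    using choose_ab[OF prior TP] by blast
  obtain a2 b2 where ab2: "0 \<le> a2" "a2 \<le> 1" "0 \<le> b2" "b2 \<le> 1"
      "p * a2 = TX a b g p l'" "(1 - p) * b2 = TY a b d p h'"
    using choose_ab[OF prior TP'] by blast
  note C1 = constructed[OF s12 ab1(1-4) pr recv_match gd ab1(5-6)[unfolded a_def b_def g_def d_def]]
  note C2 = constructed[OF s12 ab2(1-4) pr' recv_match gd ab2(5-6)[unfolded a_def b_def g_def d_def]]
  have L1: "exp_util uR p phi st \<ge> uR T1 A2 * p + uR T2 A2 * (1-p) + a * TX a b g p l - b * TY a b d p h"
    using max[of "psi0 s1 s2 a1 b1" "ind s1"] C1 by (simp add: a_def b_def g_def d_def)
  from opt'(1) obtain st'' where br'': "best_response uS uR l' h' p phi' st''"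
    and so'': "\<And>psi rho. is_scheme (psi :: state \<Rightarrow> 's \<Rightarrow> real) \<and> best_response uS uR l' h' p psi rho
       \<Longrightarrow> exp_util uS p psi rho \<le> exp_util uS p phi' st''"
    and sch': "is_scheme phi'"
    unfolding sender_optimal_def by blast
  have "is_scheme (psi0 s1 s2 a2 b2)" using C2 by (simp add: sender_optimal_def)
  hence S1: "exp_util uS p (psi0 s1 s2 a2 b2) (ind s1) \<le> exp_util uS p phi' st''"
    using so'' C2 by blast
  have S2: "exp_util uS p phi' st'' \<le> exp_util uS p phi' st'"
    using opt'(2) br'' by (simp add: best_response_def)
  have ro': "receiver_opt uR l' h' p phi' st'" using opt'(2) by (simp add: best_response_def)
  have Sge: "g * (p * XX phi' st' T1) - d * ((1 - p) * XX phi' st' T2) \<ge> g * TX a b g p l' - d * TY a b d p h'"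
    using S1 S2 C2 eu[OF sch', of uS p st'] by (simp add: a_def b_def g_def d_def)
  have G': "a * (p * XX phi' st' T1) - b * ((1 - p) * XX phi' st' T2) \<le> a * TX a b g p l' - b * TY a b d p h'"
    using outcome_core[OF sch' ro' pr' recv_match gd] Sge by (simp add: a_def b_def g_def d_def)
  have M: "a * TX a b g p l' - b * TY a b d p h' \<le> a * TX a b g p l - b * TY a b d p h"
    using target_mono[OF a0 b0 gd' binding prior] .
  have "exp_util uR p phi' st' = uR T1 A2 * p + uR T2 A2 * (1-p) + (a * (p * XX phi' st' T1) - b * ((1 - p) * XX phi' st' T2))"
    using eu[OF sch', of uR p st'] by (simp add: a_def b_def)
  then show ?thesis using L1 G' M by linarith
qed

end
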